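(* Let $a_0>0$, $l\in2\mathbb{N}^*$ and $k\in\mathbb{N}^*$. Let $\widehat T^k(0):=\{y=(y_1,\dots,y_k)\in\mathbb{R}^k: y_1<y_2<\dots<y_k\}$ and define $N=(N^1,\dots,N^k):\widehat T^k(0)\to\mathbb{R}^k$ by $$N^i(y):=a_0ly_i^{l-1}-2\sum_{j\ne i}\frac1{y_i-y_j},\qquad i=1,\dots,k.$$ Then $N$ has exactly one zero $y^*\in\widehat T^k(0)$, and the Brouwer degree of $N$ at $0$ equals $1$: $\deg(N,U,0)=1$ for every bounded open set $U$ with $y^*\in U$ and $\overline U\subset\widehat T^k(0)$. *)

theory Defs
  imports "HOL-Analysis.Analysis"
begin

text \<open>Ordered open cone  T^k(0) = {y. y_1 < ... < y_k}; the index type 'n is a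
  finite linear order (of cardinality k).\<close>
definition ordered_cone :: "(real^('n::{finite,linorder})) set" where
  "ordered_cone = {y. \<forall>i j. i < j \<longrightarrow> y $ i < y $ j}"

definition Nmap :: "real \<Rightarrow> nat \<Rightarrow> real^('n::{finite,linorder}) \<Rightarrow> real^('n::{finite,linorder})" where
  "Nmap a0 l y = (\<chi> i. a0 * real l * (y $ i) ^ (l - 1)
                     - 2 * (\<Sum>j\<in>UNIV - {i}. 1 / (y $ i - y $ j)))"

text \<open>Brouwer degree of a C^1 map (analytic definition, e.g. Deimling):
  f is C^1 on an open neighbourhood S of closure U, U bounded open, y not in f(boundary U);
  deg(f,U,y) = d means: for every regular value p of f with |p - y| < dist(y, f(boundary U)),
  the sum of the signs of the Jacobian determinants over the preimages of p in U equals d.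
  (By Sard's theorem such regular values exist, so d is uniquely determined.)\<close>
definition has_brouwer_degree ::
  "(real^('n::finite) \<Rightarrow> real^'n) \<Rightarrow> (real^'n) set \<Rightarrow> real^'n \<Rightarrow> int \<Rightarrow> bool" where
  "has_brouwer_degree f U y d \<longleftrightarrow>
     bounded U \<and> open U \<and> y \<notin> f ` frontier U \<and>
     (\<exists>S f'. open S \<and> closure U \<subseteq> S \<and> continuous_on S f' \<and>
        (\<forall>x\<in>S. (f has_derivative blinfun_apply (f' x)) (at x))) \<and>
     (\<forall>p. dist p y < infdist y (f ` frontier U) \<longrightarrow>
        (\<forall>x\<in>closure U. f x = p \<longrightarrow> det (matrix (frechet_derivative f (at x))) \<noteq> 0) \<longrightarrow>
        (\<Sum>x\<in>{x\<in>U. f x = p}. sgn (det (matrix (frechet_derivative f (at x))))) = of_int d)"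

end

theory Submission
  imports Defs
begin

lemma sum_swap_offdiag:
  assumes "finite A"
  shows "(\<Sum>i\<in>A. \<Sum>j\<in>A-{i}. f i j) = (\<Sum>i\<in>A. \<Sum>j\<in>A-{i}. f j i)"
proof -
  have e: "\<And>i. A - {i} = {j\<in>A. i \<noteq> j}" by auto
  have e2: "\<And>i. A - {i} = {j\<in>A. j \<noteq> i}" by auto
  show ?thesis unfolding e using sum.swap_restrict[OF assms assms, of "\<lambda>i j. f j i" "\<lambda>j i. i \<noteq> j"]
    by (simp add: e2[symmetric] e[symmetric])
qed

lemma odd_pow_mono:
  fixes a b :: real
  assumes "odd m" "a < b"
  shows "a^m < b^m"
proof -
  have m0: "m > 0" using assms(1) by (cases m) auto
  consider "0 \<le> a" | "b \<le> 0" | "a < 0" "0 < b" by linarith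
  then show ?thesis
  proof cases
    case 1 then show ?thesis using power_strict_mono[OF assms(2) 1 m0] by simp
  next
    case 2
    have "(-b)^m < (-a)^m" using power_strict_mono[of "-b" "-a" m] 2 assms m0 by simp
    then show ?thesis using assms(1) by (simp add: power_minus_odd)
  next
    case 3
    have "a^m < 0" using 3 assms(1) zero_le_odd_power[of m a] by linarith
    moreover have "b^m > 0" using 3 m0 by simp
    ultimately show ?thesis by linarith
  qed
qed

lemma odd_pow_pos:
  fixes a b :: real
  assumes "odd m" "a \<noteq> b"
  shows "(a^m - b^m) * (a - b) > 0"
proof (cases "a < b")
  case True then show ?thesis using odd_pow_mono[OF assms(1) True] by (simp add: mult_neg_neg)
next
  case False then have "b < a" using assms by simp
  then show ?thesis using odd_pow_mono[OF assms(1)] by (simp add: mult_pos_pos)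
qed

lemma pair_ineq0:
  fixes u v :: real
  assumes "u * v > 0"
  shows "(1/v - 1/u) * (u - v) \<ge> 0"
proof -
  have "u \<noteq> 0" "v \<noteq> 0" using assms by auto
  then have "(1/v - 1/u) * (u - v) = (u-v)^2/(u * v)" by (simp add: field_simps power2_eq_square)
  then show ?thesis using assms by simp
qed

lemma pair_ineq:
  fixes xi xj yi yj :: real
  assumes "(xi - xj)*(yi-yj) > 0"
  shows "(1/(yi-yj) - 1/(xi-xj))*(xi-yi) + (1/(yj-yi) - 1/(xj-xi))*(xj-yj) \<ge> 0"
proof -
  have a: "1/(yj-yi) = - (1/(yi-yj))" "1/(xj-xi) = - (1/(xi-xj))"
    by (metis minus_diff_eq divide_minus_right)+
  have "(1/(yi-yj) - 1/(xi-xj))*(xi-yi) + (1/(yj-yi) - 1/(xj-xi))*(xj-yj)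
     = (1/(yi-yj) - 1/(xi-xj)) * ((xi-yi) - (xj-yj))"
  proof -
    have g: "\<And>P Q a b::real. (P - Q)*a + (-P - -Q)*b = (P-Q)*(a-b)" by algebra
    show ?thesis unfolding a by (rule g)
  qed
  also have "... = (1/(yi-yj) - 1/(xi-xj)) * ((xi-xj) - (yi-yj))" by (simp add: algebra_simps)
  finally have "(1/(yi-yj) - 1/(xi-xj))*(xi-yi) + (1/(yj-yi) - 1/(xj-xi))*(xj-yj)
     = (1/(yi-yj) - 1/(xi-xj)) * ((xi-xj) - (yi-yj))" .
  then show ?thesis using pair_ineq0[OF assms] by simp
qed

lemma hd_vec:
  fixes f :: "'a::real_normed_vector \<Rightarrow> real^'n"
  assumes "\<And>i. ((\<lambda>x. f x $ i) has_derivative (\<lambda>h. f' h $ i)) (at a)"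
  shows "(f has_derivative f') (at a)"
  using assms has_derivative_componentwise_within[of f f' a UNIV]
  by (auto simp: Basis_vec_def inner_axis)

lemma cone_ne:
  assumes "x \<in> ordered_cone" "i \<noteq> j"
  shows "x$i \<noteq> x$j"
proof -
  have "i < j \<or> j < i" using assms(2) by auto
  then show ?thesis using assms(1) unfolding ordered_cone_def by force
qed

lemma cone_prod:
  assumes "x \<in> ordered_cone" "y \<in> ordered_cone" "i \<noteq> j"
  shows "(x$i - x$j)*(y$i - y$j) > 0"
proof (cases "i < j")
  case True
  then have "x$i < x$j" "y$i < y$j" using assms unfolding ordered_cone_def by auto
  then show ?thesis by (intro mult_neg_neg) auto
next
  case False
  then have "j < i" using assms(3) by simp
  then have "x$j < x$i" "y$j < y$i" using assms unfolding ordered_cone_def by auto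
  then show ?thesis by (intro mult_pos_pos) auto
qed

lemma Nmap_nth: "Nmap a0 l y $ i = a0 * real l * (y $ i) ^ (l - 1) - 2 * (\<Sum>j\<in>UNIV - {i}. 1 / (y $ i - y $ j))"
  by (simp add: Nmap_def)

lemma Nmap_mono:
  fixes x y :: "real^'n::{finite,linorder}"
  assumes "a0 > 0" "even l" "l > 0" "x \<in> ordered_cone" "y \<in> ordered_cone" "x \<noteq> y"
  shows "(Nmap a0 l x - Nmap a0 l y) \<bullet> (x - y) > 0"
proof -
  define P where "P i = (a0*real l)*(((x$i)^(l-1) - (y$i)^(l-1))*(x$i - y$i))" for i
  define h where "h i j = (1/(y$i-y$j) - 1/(x$i-x$j))*(x$i-y$i)" for i j
  have c1: "(Nmap a0 l x - Nmap a0 l y)$i = a0*real l*((x$i)^(l-1) - (y$i)^(l-1)) + 2*(\<Sum>j\<in>UNIV-{i}. 1/(y$i-y$j) - 1/(x$i-x$j))" for i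
    by (simp add: Nmap_nth sum_subtractf right_diff_distrib)
  have comp: "(Nmap a0 l x $ i - Nmap a0 l y $ i) * (x$i - y$i) = P i + 2 * (\<Sum>j\<in>UNIV-{i}. h i j)" for i
    using c1[of i] unfolding P_def h_def by (simp add: sum_distrib_right distrib_right mult.assoc)
  have eq: "(Nmap a0 l x - Nmap a0 l y) \<bullet> (x - y) = (\<Sum>i\<in>UNIV. P i) + 2*(\<Sum>i\<in>UNIV. \<Sum>j\<in>UNIV-{i}. h i j)"
  proof -
    have "(Nmap a0 l x - Nmap a0 l y) \<bullet> (x - y) = (\<Sum>i\<in>UNIV. P i + 2*(\<Sum>j\<in>UNIV-{i}. h i j))"
      unfolding inner_vec_def using comp by simp
    then show ?thesis by (simp add: sum.distrib sum_distrib_left)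
  qed
  have "2*(\<Sum>i\<in>UNIV. \<Sum>j\<in>UNIV-{i}. h i j) = (\<Sum>i\<in>UNIV. \<Sum>j\<in>UNIV-{i}. h i j) + (\<Sum>i\<in>UNIV. \<Sum>j\<in>UNIV-{i}. h j i)"
    using sum_swap_offdiag[of UNIV h] by simp
  also have "... = (\<Sum>i\<in>UNIV. \<Sum>j\<in>UNIV-{i}. h i j + h j i)" by (simp add: sum.distrib)
  finally have S0: "2*(\<Sum>i\<in>UNIV. \<Sum>j\<in>UNIV-{i}. h i j) = (\<Sum>i\<in>UNIV. \<Sum>j\<in>UNIV-{i}. h i j + h j i)" .
  have "0 \<le> (\<Sum>i\<in>UNIV. \<Sum>j\<in>UNIV-{i}. h i j + h j i)"
  proof (intro sum_nonneg)
    fix i j :: 'n assume "j \<in> UNIV - {i}"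
    then have "i \<noteq> j" by auto
    then show "0 \<le> h i j + h j i" unfolding h_def using pair_ineq[OF cone_prod[OF assms(4,5)]] by auto
  qed
  then have S: "2*(\<Sum>i\<in>UNIV. \<Sum>j\<in>UNIV-{i}. h i j) \<ge> 0" using S0 by simp
  have odd: "odd (l-1)" using assms(2,3) by simp
  have Pnn: "P i \<ge> 0" for i
  proof (cases "x$i = y$i")
    case True then show ?thesis by (simp add: P_def)
  next
    case False then show ?thesis using assms(1,3) unfolding P_def
      by (intro mult_nonneg_nonneg[OF _ less_imp_le[OF odd_pow_pos[OF odd False]]]) simp
  qed
  obtain i where i: "x$i \<noteq> y$i" using assms(6) by (metis vec_eq_iff)
  have "P i > 0" using assms(1,3) unfolding P_def by (intro mult_pos_pos[OF _ odd_pow_pos[OF odd i]]) simp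
  then have "(\<Sum>i\<in>UNIV. P i) > 0" by (intro sum_pos2[of UNIV i]) (auto intro: Pnn)
  then show ?thesis using eq S by linarith
qed

lemma Nmap_inj:
  fixes a0 :: real
  assumes "a0 > 0" "even l" "l > 0"
  shows "inj_on (Nmap a0 l) (ordered_cone :: (real^'n::{finite,linorder}) set)"
proof (rule inj_onI, rule ccontr)
  fix x y assume "x \<in> ordered_cone" "y \<in> ordered_cone" "Nmap a0 l x = Nmap a0 l y" "x \<noteq> y"
  then show False using Nmap_mono[OF assms, of x y] by simp
qed

lemma Nmap_xbound:
  fixes x :: "real^'n::{finite,linorder}"
  assumes a0: "a0 > 0" and l: "even l" "l > 0" and x: "x \<in> ordered_cone"
    and Q: "\<And>i. \<bar>Nmap a0 l x $ i\<bar> \<le> Q"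
  shows "\<bar>x$i\<bar> \<le> max 1 ((real CARD('n)*Q + real CARD('n)^2)/(a0*real l))"
proof -
  define k where "k = real CARD('n)"
  define g where "g i j = x$i/(x$i - x$j)" for i j
  have Nx: "Nmap a0 l x $ i * x$i = a0 * real l * (x$i)^l - 2 * (\<Sum>j\<in>UNIV-{i}. g i j)" for i
  proof -
    have "(x$i)^(l-1) * x$i = (x$i)^l" using power_minus_mult[OF l(2)] by blast
    then show ?thesis unfolding Nmap_nth g_def by (simp add: sum_distrib_right left_diff_distrib mult.assoc)
  qed
  have gsum: "2 * (\<Sum>i\<in>UNIV. \<Sum>j\<in>UNIV-{i}. g i j) = k*(k-1)"
  proof -
    have "2 * (\<Sum>i\<in>UNIV. \<Sum>j\<in>UNIV-{i}. g i j) = (\<Sum>i\<in>UNIV. \<Sum>j\<in>UNIV-{i}. g i j) + (\<Sum>i\<in>UNIV. \<Sum>j\<in>UNIV-{i}. g j i)"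
      using sum_swap_offdiag[of UNIV g] by simp
    also have "... = (\<Sum>i\<in>UNIV. \<Sum>j\<in>UNIV-{i}. g i j + g j i)" by (simp add: sum.distrib)
    also have "... = (\<Sum>i\<in>(UNIV::'n set). \<Sum>j\<in>UNIV-{i}. (1::real))"
    proof -
      have pw: "g i j + g j i = 1" if "j \<in> UNIV - {i}" for i j
      proof -
        have "x$i - x$j \<noteq> 0" "x$j - x$i \<noteq> 0" using cone_ne[OF x, of i j] that by auto
        have e: "x$j/(x$j-x$i) = -(x$j/(x$i - x$j))" by (metis minus_diff_eq divide_minus_right)
        have "x$i/(x$i-x$j) - x$j/(x$i - x$j) = 1" using \<open>x$i - x$j \<noteq> 0\<close>
          by (simp add: diff_divide_distrib[symmetric])
        then show ?thesis unfolding g_def e by simp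
      qed
      show ?thesis
      proof (rule sum.cong[OF refl])
        fix i show "(\<Sum>j\<in>UNIV-{i}. g i j + g j i) = (\<Sum>j\<in>UNIV-{i}. (1::real))"
          by (rule sum.cong[OF refl]) (rule pw)
      qed
    qed
    also have "... = k*(k-1)" by (simp add: k_def card_Diff_subset)
    finally show ?thesis .
  qed
  let ?S = "(\<lambda>i. \<bar>x$i\<bar>) ` UNIV"
  have "Max ?S \<in> ?S" by (intro Max_in) auto
  then obtain m where m: "Max ?S = \<bar>x$m\<bar>" by (metis (no_types, lifting) imageE)
  have mx: "\<bar>x$i\<bar> \<le> \<bar>x$m\<bar>" for i using Max_ge[of ?S "\<bar>x$i\<bar>"] m by auto
  define M where "M = \<bar>x$m\<bar>"
  have "(\<Sum>i\<in>UNIV. Nmap a0 l x $ i * x$i) = a0 * real l * (\<Sum>i\<in>UNIV. (x$i)^l) - k*(k-1)"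
    unfolding Nx gsum[symmetric] by (simp add: sum_subtractf sum_distrib_left)
  moreover have "(\<Sum>i\<in>UNIV. Nmap a0 l x $ i * x$i) \<le> (\<Sum>i\<in>(UNIV::'n set). Q * M)"
  proof (intro sum_mono)
    fix i
    have "Nmap a0 l x $ i * x$i \<le> \<bar>Nmap a0 l x $ i\<bar> * \<bar>x$i\<bar>" by (simp add: abs_mult[symmetric])
    also have "... \<le> Q * M" unfolding M_def using Q[of i] mx[of i] by (intro mult_mono) auto
    finally show "Nmap a0 l x $ i * x$i \<le> Q * M" .
  qed
  moreover have "M^l \<le> (\<Sum>i\<in>UNIV. (x$i)^l)"
  proof -
    have "M^l = (x$m)^l" unfolding M_def using l(1) by (simp add: power_even_abs)
    also have "... \<le> (\<Sum>i\<in>UNIV. (x$i)^l)" using l(1) by (intro member_le_sum) (auto simp: zero_le_even_power)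
    finally show ?thesis .
  qed
  moreover have "a0 * real l * M^l \<le> a0 * real l * (\<Sum>i\<in>UNIV. (x$i)^l)"
    using calculation(3) a0 by (intro mult_left_mono) auto
  moreover have "(\<Sum>i\<in>(UNIV::'n set). Q * M) = k*Q*M" by (simp add: k_def)
  moreover have "k*(k-1) \<le> k*k" by (simp add: k_def algebra_simps)
  ultimately have main: "a0 * real l * M^l \<le> k*Q*M + k*k" by linarith
  have "M \<le> max 1 ((k*Q + k^2)/(a0*real l))"
  proof (cases "M \<le> 1")
    case True then show ?thesis by simp
  next
    case False
    have "l \<ge> 2" using l by presburger
    then have "M^2 \<le> M^l" using False by (intro power_increasing) auto
    then have "a0 * real l * M^2 \<le> a0 * real l * M^l" using a0 by (intro mult_left_mono) auto
    then have "a0 * real l * M^2 \<le> k*Q*M + k*k" using main by linarith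
    moreover have "k*k \<le> k*k*M" using False by (simp add: k_def)
    ultimately have "(a0 * real l * M) * M \<le> (k*Q + k^2) * M" by (simp add: power2_eq_square algebra_simps)
    then have "a0 * real l * M \<le> k*Q + k^2" using False by simp
    then have "M \<le> (k*Q + k^2)/(a0*real l)" using a0 l(2) by (simp add: field_simps)
    then show ?thesis by simp
  qed
  then show ?thesis using mx[of i] unfolding M_def k_def by simp
qed

lemma Nmap_gap:
  fixes x :: "real^'n::{finite,linorder}"
  assumes a0: "a0 > 0" and l: "l > 0" and x: "x \<in> ordered_cone"
    and Q: "\<And>i. \<bar>Nmap a0 l x $ i\<bar> \<le> Q" and R: "\<And>i. \<bar>x$i\<bar> \<le> R" and ij: "i < j"
  shows "x$j - x$i \<ge> 2 / (real CARD('n) * (Q + a0*real l*R^(l-1)))"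
proof -
  define f where "f a b = 1/(x$b - x$a)" for a b
  define A where "A = {..i}"
  define B where "B = real CARD('n) * (Q + a0*real l*R^(l-1))"
  have Nf: "Nmap a0 l x $ a - a0*real l*(x$a)^(l-1) = 2*(\<Sum>b\<in>UNIV-{a}. f a b)" for a
  proof -
    have "(\<Sum>b\<in>UNIV-{a}. 1/(x$a - x$b)) = (\<Sum>b\<in>UNIV-{a}. - f a b)"
      unfolding f_def by (rule sum.cong[OF refl]) (metis minus_diff_eq divide_minus_right)
    then show ?thesis unfolding Nmap_nth by (simp add: sum_negf)
  qed
  have split: "(\<Sum>b\<in>UNIV-{a}. f a b) = (\<Sum>b\<in>A-{a}. f a b) + (\<Sum>b\<in>UNIV-A. f a b)" if "a \<in> A" for a
  proof -
    have "UNIV-{a} = (A-{a}) \<union> (UNIV-A)" using that by auto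
    moreover have "sum (f a) (A - {a} \<union> (UNIV - A)) = sum (f a) (A - {a}) + sum (f a) (UNIV - A)"
      by (rule sum.union_disjoint) auto
    ultimately show ?thesis by simp
  qed
  have anti: "(\<Sum>a\<in>A. \<Sum>b\<in>A-{a}. f a b) = 0"
  proof -
    have "(\<Sum>a\<in>A. \<Sum>b\<in>A-{a}. f a b) = (\<Sum>a\<in>A. \<Sum>b\<in>A-{a}. f b a)"
      using sum_swap_offdiag[of A f] by simp
    also have "... = (\<Sum>a\<in>A. \<Sum>b\<in>A-{a}. - f a b)"
      unfolding f_def by (intro sum.cong refl) (metis minus_diff_eq divide_minus_right)
    also have "... = - (\<Sum>a\<in>A. \<Sum>b\<in>A-{a}. f a b)" by (simp add: sum_negf)
    finally show ?thesis by simp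
  qed
  have eq: "(\<Sum>a\<in>A. Nmap a0 l x $ a - a0*real l*(x$a)^(l-1)) = 2*(\<Sum>a\<in>A. \<Sum>b\<in>UNIV-A. f a b)"
  proof -
    have "(\<Sum>a\<in>A. Nmap a0 l x $ a - a0*real l*(x$a)^(l-1)) = (\<Sum>a\<in>A. 2*((\<Sum>b\<in>A-{a}. f a b) + (\<Sum>b\<in>UNIV-A. f a b)))"
      by (rule sum.cong[OF refl], subst Nf, subst split) auto
    also have "... = 2*(\<Sum>a\<in>A. \<Sum>b\<in>A-{a}. f a b) + 2*(\<Sum>a\<in>A. \<Sum>b\<in>UNIV-A. f a b)"
      by (simp add: sum.distrib sum_distrib_left)
    finally show ?thesis using anti by simp
  qed
  have fpos: "f a b \<ge> 0" if "a \<in> A" "b \<in> UNIV - A" for a b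
  proof -
    have "a < b" using that ij unfolding A_def by auto
    then have "x$a < x$b" using x unfolding ordered_cone_def by auto
    then show ?thesis unfolding f_def by simp
  qed
  have "f i j \<le> (\<Sum>b\<in>UNIV-A. f i b)"
    using ij fpos[of i] by (intro member_le_sum) (auto simp: A_def)
  also have "... \<le> (\<Sum>a\<in>A. \<Sum>b\<in>UNIV-A. f a b)"
    using fpos by (intro member_le_sum[where f="\<lambda>a. \<Sum>b\<in>UNIV-A. f a b"] sum_nonneg) (auto simp: A_def)
  finally have low: "2 * f i j \<le> (\<Sum>a\<in>A. Nmap a0 l x $ a - a0*real l*(x$a)^(l-1))" using eq by simp
  have trm: "Nmap a0 l x $ a - a0*real l*(x$a)^(l-1) \<le> Q + a0*real l*R^(l-1)" for a
  proof -
    have "\<bar>x$a\<bar>^(l-1) \<le> R^(l-1)" using R[of a] by (intro power_mono) auto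
    then have "- ((x$a)^(l-1)) \<le> R^(l-1)" by (metis abs_ge_minus_self order.trans power_abs)
    then have "a0*real l*(- ((x$a)^(l-1))) \<le> a0*real l*R^(l-1)" using a0 by (intro mult_left_mono) auto
    moreover have "Nmap a0 l x $ a \<le> Q" using Q[of a] by simp
    ultimately show ?thesis by simp
  qed
  have QR: "Q + a0*real l*R^(l-1) \<ge> 0"
  proof -
    have "Q \<ge> 0" using Q[of i] abs_ge_zero[of "Nmap a0 l x $ i"] by linarith
    moreover have "R \<ge> 0" using R[of i] abs_ge_zero[of "x $ i"] by linarith
    ultimately show ?thesis using a0 by simp
  qed
  have "(\<Sum>a\<in>A. Nmap a0 l x $ a - a0*real l*(x$a)^(l-1)) \<le> (\<Sum>a\<in>A. Q + a0*real l*R^(l-1))"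
    by (intro sum_mono trm)
  also have "... \<le> (\<Sum>a\<in>(UNIV::'n set). Q + a0*real l*R^(l-1))"
    using QR by (intro sum_mono2) auto
  also have "... = B" by (simp add: B_def)
  finally have "2 * f i j \<le> B" using low by linarith
  moreover have d: "x$j - x$i > 0" using x ij unfolding ordered_cone_def by auto
  ultimately have "2 / (x$j - x$i) \<le> B" unfolding f_def by simp
  then have "2 \<le> B * (x$j - x$i)" using d by (simp add: divide_le_eq)
  moreover have "B > 0" using \<open>2 / (x$j - x$i) \<le> B\<close> d by (smt (verit) divide_pos_pos)
  ultimately show ?thesis unfolding B_def[symmetric] by (simp add: divide_le_eq mult.commute)
qed

lemma cone_open: "open (ordered_cone :: (real^'n::{finite,linorder}) set)"
proof -
  have "(ordered_cone :: (real,'n) vec set) = (\<Inter>i\<in>UNIV. \<Inter>j\<in>{j. i<j}. {y. y$i < y$j})"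
    by (auto simp: ordered_cone_def)
  also have "open ..." by (intro open_INT ballI open_Collect_less continuous_intros) auto
  finally show ?thesis .
qed

lemma cone_nonempty: "(\<chi> i. real (card {j. j < i})) \<in> (ordered_cone :: (real^'n::{finite,linorder}) set)"
proof -
  have "card {m::'n. m < i} < card {m. m < j}" if "i < j" for i j :: 'n
    using that by (intro psubset_card_mono) auto
  then show ?thesis by (simp add: ordered_cone_def)
qed

lemma Nmap_cont: "continuous_on (ordered_cone :: (real^'n::{finite,linorder}) set) (Nmap a0 l)"
  unfolding Nmap_def
  by (intro continuous_intros) (auto dest: cone_ne)

lemma Nmap_image_closed:
  assumes a0: "a0 > 0" and l: "even l" "l > 0"
  shows "closed (Nmap a0 l ` (ordered_cone :: (real^'n::{finite,linorder}) set))"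
proof -
  let ?C = "ordered_cone :: (real,'n) vec set"
  let ?N = "Nmap a0 l :: (real,'n) vec \<Rightarrow> (real,'n) vec"
  have "closure (?N ` ?C) \<subseteq> ?N ` ?C"
  proof
    fix q assume q: "q \<in> closure (?N ` ?C)"
    define Q where "Q = norm q + 1"
    define R where "R = max 1 ((real CARD('n)*Q + real CARD('n)^2)/(a0*real l))"
    define \<delta> where "\<delta> = 2 / (real CARD('n) * (Q + a0*real l*R^(l-1)))"
    define K where "K = {x::(real,'n) vec. (\<forall>i. \<bar>x$i\<bar> \<le> R) \<and> (\<forall>i j. i < j \<longrightarrow> \<delta> \<le> x$j - x$i)}"
    have Q0: "Q > 0" unfolding Q_def by (smt (verit) norm_ge_zero)
    have R0: "R \<ge> 0" unfolding R_def by simp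
    have d0: "\<delta> > 0" unfolding \<delta>_def
    proof (intro divide_pos_pos mult_pos_pos)
      have "0 \<le> a0 * real l * R^(l-1)" using R0 a0 by simp
      then show "0 < Q + a0 * real l * R ^ (l - 1)" using Q0 by linarith
    qed auto
    have KC: "K \<subseteq> ?C" unfolding K_def ordered_cone_def using d0 by force
    have inK: "x \<in> K" if "x \<in> ?C" "norm (?N x - q) \<le> 1" for x
    proof -
      have Qb: "\<bar>?N x $ i\<bar> \<le> Q" for i
      proof -
        have "\<bar>?N x $ i\<bar> \<le> norm (?N x)" by (rule component_le_norm_cart)
        also have "... \<le> norm q + norm (?N x - q)" by (metis norm_triangle_sub add.commute)
        finally show ?thesis using that(2) unfolding Q_def by simp
      qed
      have Rb: "\<bar>x$i\<bar> \<le> R" for i unfolding R_def by (rule Nmap_xbound[OF a0 l that(1) Qb])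
      show ?thesis unfolding K_def \<delta>_def
        using Nmap_gap[OF a0 l(2) that(1) Qb Rb] Rb by auto
    qed
    have clK: "closed K"
    proof -
      have "K = (\<Inter>i\<in>UNIV. {x::(real,'n) vec. \<bar>x$i\<bar> \<le> R}) \<inter> (\<Inter>i\<in>UNIV. \<Inter>j\<in>{j. i<j}. {x. \<delta> \<le> x$j - x$i})"
        unfolding K_def by auto
      also have "closed ..." by (intro closed_Int closed_INT ballI closed_Collect_le continuous_intros)
      finally show ?thesis .
    qed
    have bK: "bounded K"
    proof -
      have "norm x \<le> real CARD('n) * R" if "x \<in> K" for x
      proof -
        have "norm x \<le> (\<Sum>i\<in>UNIV. \<bar>x$i\<bar>)" by (rule norm_le_l1_cart)
        also have "... \<le> (\<Sum>i\<in>(UNIV::'n set). R)" using that unfolding K_def by (intro sum_mono) auto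
        finally show ?thesis by simp
      qed
      then show ?thesis unfolding bounded_iff by blast
    qed
    define K0 where "K0 = K \<inter> ?N -` cball q 1"
    have contK: "continuous_on K ?N" using Nmap_cont KC continuous_on_subset by blast
    have "closed K0" unfolding K0_def by (rule continuous_closed_preimage[OF contK clK closed_cball])
    moreover have "K0 \<subseteq> K" unfolding K0_def by auto
    ultimately have "compact K0" using bK clK compact_eq_bounded_closed bounded_subset by metis
    then have "compact (?N ` K0)" using contK \<open>K0 \<subseteq> K\<close> continuous_on_subset compact_continuous_image by metis
    then have clNK: "closed (?N ` K0)" by (rule compact_imp_closed)
    have "q \<in> closure (?N ` K0)" unfolding closure_approachable
    proof (intro allI impI)
      fix e :: real assume "e > 0"
      then obtain y where y: "y \<in> ?N ` ?C" "dist y q < min e 1"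
        using q unfolding closure_approachable by (metis min_less_iff_conj zero_less_one)
      then obtain x where x: "x \<in> ?C" "y = ?N x" by auto
      have "norm (?N x - q) \<le> 1" using y x by (simp add: dist_norm)
      then have "x \<in> K0" unfolding K0_def using inK[OF x(1)] by (simp add: dist_norm norm_minus_commute)
      then show "\<exists>y\<in>?N ` K0. dist y q < e" using x y by auto
    qed
    then have "q \<in> ?N ` K0" using clNK closure_closed by metis
    then show "q \<in> ?N ` ?C" using \<open>K0 \<subseteq> K\<close> KC by auto
  qed
  then show ?thesis using closure_subset_eq by blast
qed

lemma Nmap_surj:
  assumes a0: "a0 > 0" and l: "even l" "l > 0"
  shows "Nmap a0 l ` (ordered_cone :: (real^'n::{finite,linorder}) set) = UNIV"
proof -
  let ?T = "Nmap a0 l ` (ordered_cone :: (real,'n) vec set)"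
  have op: "open ?T" by (rule invariance_of_domain[OF Nmap_cont cone_open Nmap_inj[OF assms]])
  have cl: "closed ?T" by (rule Nmap_image_closed[OF assms])
  have ne: "?T \<noteq> {}" using cone_nonempty by blast
  have "connected (UNIV :: (real,'n) vec set)" by (simp add: path_connected_imp_connected)
  then show ?thesis using op cl ne unfolding connected_clopen by auto
qed

definition Dmap :: "real \<Rightarrow> nat \<Rightarrow> real^('n::{finite,linorder}) \<Rightarrow> real^('n::{finite,linorder}) \<Rightarrow> real^('n::{finite,linorder})" where
  "Dmap a0 l x h = (\<chi> i. a0 * real l * (real (l-1) * (x$i)^(l-2) * h$i)
                     + 2 * (\<Sum>j\<in>UNIV-{i}. (h$i - h$j) / (x$i - x$j)^2))"

lemma has_derivative_vec_nth' [derivative_intros]: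
  "((\<lambda>y. y $ i) has_derivative (\<lambda>h. h $ i)) F"
  by (rule bounded_linear_imp_has_derivative) (rule bounded_linear_vec_nth)

lemma inv_aux: "- (inverse (d::real) * a * inverse d) = (-a)/d^2"
  by (simp add: power2_eq_square divide_inverse mult.commute mult.left_commute inverse_mult_distrib)

lemma Nmap_deriv:
  fixes x :: "real^'n::{finite,linorder}"
  assumes x: "x \<in> ordered_cone" and l: "l > 0"
  shows "(Nmap a0 l has_derivative Dmap a0 l x) (at x)"
proof (rule hd_vec)
  fix i :: 'n
  have nz: "x$i - x$j \<noteq> 0" if "j \<in> UNIV - {i}" for j using cone_ne[OF x, of i j] that by auto
  have "((\<lambda>y. a0 * real l * (y$i)^(l-1) - 2 * (\<Sum>j\<in>UNIV-{i}. 1/(y$i - y$j))) has_derivative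
         (\<lambda>h. a0 * real l * (real (l-1) * (x$i)^(l-2) * h$i) + 2 * (\<Sum>j\<in>UNIV-{i}. (h$i - h$j) / (x$i - x$j)^2))) (at x)"
  proof -
    have dj: "((\<lambda>y. 1/(y$i - y$j)) has_derivative (\<lambda>h. (h$j - h$i)/(x$i-x$j)^2)) (at x)"
      if "j \<in> UNIV-{i}" for j
    proof -
      have n: "x$i - x$j \<noteq> 0" using nz that .
      show ?thesis
        apply (rule has_derivative_eq_rhs)
         apply (rule derivative_intros has_derivative_vec_nth')+
        using n by (simp_all add: fun_eq_iff inv_aux)
    qed
    have ds: "((\<lambda>y. \<Sum>j\<in>UNIV-{i}. 1/(y$i - y$j)) has_derivative (\<lambda>h. \<Sum>j\<in>UNIV-{i}. (h$j - h$i)/(x$i-x$j)^2)) (at x)"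
      by (rule has_derivative_sum) (rule dj)
    have dp: "((\<lambda>y. (y$i)^(l-1)) has_derivative (\<lambda>h. real (l-1) * (x$i)^(l-2) * h$i)) (at x)"
    proof (rule has_derivative_eq_rhs[OF has_derivative_power[OF has_derivative_vec_nth']])
      have "l - 1 - 1 = l - 2" by simp
      then show "(\<lambda>h. real (l - 1) * h $ i * x $ i ^ (l - 1 - 1)) = (\<lambda>h. real (l-1) * (x$i)^(l-2) * h$i)"
        by (simp add: fun_eq_iff mult.commute mult.left_commute)
    qed
    have "((\<lambda>y. a0 * real l * (y$i)^(l-1) - 2 * (\<Sum>j\<in>UNIV-{i}. 1/(y$i - y$j))) has_derivative
         (\<lambda>h. a0 * real l * (real (l-1) * (x$i)^(l-2) * h$i) - 2 * (\<Sum>j\<in>UNIV-{i}. (h$j - h$i)/(x$i-x$j)^2))) (at x)"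
      by (intro has_derivative_diff has_derivative_mult_right dp ds)
    moreover have "(\<Sum>j\<in>UNIV-{i}. (h$j - h$i)/(x$i-x$j)^2) = - (\<Sum>j\<in>UNIV-{i}. (h$i - h$j)/(x$i-x$j)^2)" for h :: "(real,'n) vec"
      unfolding sum_negf[symmetric] by (rule sum.cong[OF refl]) (simp add: minus_divide_left)
    ultimately show ?thesis by simp
  qed
  then show "((\<lambda>y. Nmap a0 l y $ i) has_derivative (\<lambda>h. Dmap a0 l x h $ i)) (at x)"
    by (simp add: Nmap_nth Dmap_def)
qed

lemma Dmap_psd:
  fixes x :: "real^'n::{finite,linorder}"
  assumes x: "x \<in> ordered_cone" and a0: "a0 > 0" and l: "even l" "l > 0"
  shows "h \<bullet> Dmap a0 l x h \<ge> 0"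
proof -
  define P where "P i = a0 * real l * (real (l-1) * (x$i)^(l-2) * (h$i * h$i))" for i
  define g where "g i j = h$i * (h$i - h$j) / (x$i - x$j)^2" for i j
  have comp: "h$i * Dmap a0 l x h $ i = P i + 2 * (\<Sum>j\<in>UNIV-{i}. g i j)" for i
    unfolding Dmap_def P_def g_def by (simp add: distrib_left sum_distrib_left mult_ac)
  have eq: "h \<bullet> Dmap a0 l x h = (\<Sum>i\<in>UNIV. P i) + 2 * (\<Sum>i\<in>UNIV. \<Sum>j\<in>UNIV-{i}. g i j)"
  proof -
    have "h \<bullet> Dmap a0 l x h = (\<Sum>i\<in>UNIV. P i + 2*(\<Sum>j\<in>UNIV-{i}. g i j))"
      unfolding inner_vec_def using comp by simp
    then show ?thesis by (simp add: sum.distrib sum_distrib_left)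
  qed
  have Pnn: "P i \<ge> 0" for i
  proof -
    have "even (l-2)" using l by simp
    then have "(x$i)^(l-2) \<ge> 0" by (simp add: zero_le_even_power)
    then show ?thesis unfolding P_def using a0 by simp
  qed
  have "2 * (\<Sum>i\<in>UNIV. \<Sum>j\<in>UNIV-{i}. g i j) = (\<Sum>i\<in>UNIV. \<Sum>j\<in>UNIV-{i}. g i j) + (\<Sum>i\<in>UNIV. \<Sum>j\<in>UNIV-{i}. g j i)"
    using sum_swap_offdiag[of UNIV g] by simp
  also have "... = (\<Sum>i\<in>UNIV. \<Sum>j\<in>UNIV-{i}. g i j + g j i)" by (simp add: sum.distrib)
  finally have S0: "2 * (\<Sum>i\<in>UNIV. \<Sum>j\<in>UNIV-{i}. g i j) = (\<Sum>i\<in>UNIV. \<Sum>j\<in>UNIV-{i}. g i j + g j i)" .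
  have "0 \<le> (\<Sum>i\<in>UNIV. \<Sum>j\<in>UNIV-{i}. g i j + g j i)"
  proof (intro sum_nonneg)
    fix i j :: 'n
    have e: "(x$j - x$i)^2 = (x$i - x$j)^2" by (simp add: power2_commute)
    have "g i j + g j i = (h$i - h$j)^2 / (x$i - x$j)^2"
      unfolding g_def e by (simp add: add_divide_distrib[symmetric] power2_eq_square algebra_simps)
    then show "0 \<le> g i j + g j i" by simp
  qed
  then show ?thesis using eq S0 Pnn by (simp add: sum_nonneg)
qed

lemma det_inj: "det (A::real^'n^'n) \<noteq> 0 \<longleftrightarrow> inj ((*v) A)"
  by (simp add: det_eq_0_rank less_rank_noninjective)

lemma det_pos_psd:
  fixes J :: "real^'n^'n"
  assumes psd: "\<And>h. h \<bullet> (J *v h) \<ge> 0" and nz: "det J \<noteq> 0"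
  shows "det J > 0"
proof (rule ccontr)
  assume "\<not> det J > 0"
  then have neg: "det J < 0" using nz by simp
  define M where "M t = (1-t) *\<^sub>R mat 1 + t *\<^sub>R J" for t :: real
  have Mv: "M t *v h = (1-t) *\<^sub>R h + t *\<^sub>R (J *v h)" for t h
    unfolding M_def by (simp add: matrix_vector_mult_add_rdistrib scaleR_matrix_vector_assoc[symmetric])
  have cont: "continuous_on {0..1} (\<lambda>t. det (M t))"
    unfolding M_def det_def by (intro continuous_intros)
  have "det (M 1) \<le> 0" using neg by (simp add: M_def)
  moreover have "0 \<le> det (M 0)" by (simp add: M_def)
  ultimately obtain t where t: "0 \<le> t" "t \<le> 1" "det (M t) = 0"
    using IVT2'[of "\<lambda>t. det (M t)" 1 0 0, OF _ _ _ cont] by auto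
  show False
  proof (cases "t = 1")
    case True then show False using t nz by (simp add: M_def)
  next
    case False
    then have t1: "t < 1" using t by simp
    have "inj ((*v) (M t))"
    proof (rule inj_onI)
      fix a b assume ab: "M t *v a = M t *v b"
      define d where "d = a - b"
      have "M t *v d = 0" using ab unfolding d_def by (simp add: matrix_vector_mult_diff_distrib)
      then have "0 = d \<bullet> (M t *v d)" by simp
      also have "... = (1-t) * (d \<bullet> d) + t * (d \<bullet> (J *v d))" by (simp add: Mv inner_add_right)
      finally have "(1-t) * (d \<bullet> d) + t * (d \<bullet> (J *v d)) = 0" by simp
      moreover have "t * (d \<bullet> (J *v d)) \<ge> 0" using t psd by simp
      moreover have "(1-t) * (d \<bullet> d) \<ge> 0" using t1 by simp
      ultimately have "(1-t) * (d \<bullet> d) = 0" by linarith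
      then have "d = 0" using t1 by simp
      then show "a = b" unfolding d_def by simp
    qed
    then show False using t(3) det_inj by blast
  qed
qed

theorem mainTheorem5:
  fixes a0 :: real and l :: nat
  assumes "a0 > 0" and "even l" and "l > 0"
  shows "\<exists>ystar\<in>(ordered_cone :: (real^('n::{finite,linorder})) set).
           Nmap a0 l ystar = 0 \<and>
           (\<forall>z\<in>ordered_cone. Nmap a0 l z = 0 \<longrightarrow> z = ystar) \<and>
           (\<forall>U. bounded U \<and> open U \<and> ystar \<in> U \<and> closure U \<subseteq> ordered_cone \<longrightarrow>
                has_brouwer_degree (Nmap a0 l) U 0 1)"
proof -
  let ?C = "ordered_cone :: (real,'n) vec set"
  let ?N = "Nmap a0 l :: (real,'n) vec \<Rightarrow> (real,'n) vec"
  have surj: "?N ` ?C = UNIV" by (rule Nmap_surj[OF assms])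
  have inj: "inj_on ?N ?C" by (rule Nmap_inj[OF assms])
  define \<phi> where "\<phi> = inv_into ?C ?N"
  have \<phi>C: "\<phi> q \<in> ?C" for q unfolding \<phi>_def by (rule inv_into_into) (simp add: surj)
  have N\<phi>: "?N (\<phi> q) = q" for q unfolding \<phi>_def by (rule f_inv_into_f) (simp add: surj)
  have \<phi>N: "\<phi> (?N x) = x" if "x \<in> ?C" for x unfolding \<phi>_def by (rule inv_into_f_f[OF inj that])
  have cont\<phi>: "continuous_on UNIV \<phi>"
    using continuous_on_inverse_open[OF cone_open Nmap_cont _ \<phi>N] surj by simp
  define ys where "ys = \<phi> 0"
  have deriv: "(?N has_derivative Dmap a0 l x) (at x)" if "x \<in> ?C" for x
    by (rule Nmap_deriv[OF that assms(3)])
  have blin: "bounded_linear (Dmap a0 l x)" if "x \<in> ?C" for x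
    using has_derivative_bounded_linear[OF deriv[OF that]] .
  have jac: "matrix (frechet_derivative ?N (at x)) *v h = Dmap a0 l x h" if "x \<in> ?C" for x h
  proof -
    have "?N differentiable (at x)" using deriv[OF that] by (auto simp: differentiable_def)
    then have "(?N has_derivative (\<lambda>h. jacobian ?N (at x) *v h)) (at x)" using jacobian_works by blast
    then have "(\<lambda>h. jacobian ?N (at x) *v h) = Dmap a0 l x" using has_derivative_unique deriv[OF that] by blast
    then show ?thesis unfolding jacobian_def by metis
  qed
  show ?thesis
  proof (intro bexI conjI ballI allI impI)
    show "ys \<in> ?C" unfolding ys_def by (rule \<phi>C)
    show "?N ys = 0" unfolding ys_def by (rule N\<phi>)
    show "z = ys" if "z \<in> ?C" "?N z = 0" for z using \<phi>N[OF that(1)] that(2) unfolding ys_def by simp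
  next
    fix U :: "(real,'n) vec set"
    assume U: "bounded U \<and> open U \<and> ys \<in> U \<and> closure U \<subseteq> ?C"
    have UC: "U \<subseteq> ?C" using U closure_subset by blast
    show "has_brouwer_degree ?N U 0 1"
      unfolding has_brouwer_degree_def
    proof (intro conjI)
      show "bounded U" "open U" using U by auto
      show "0 \<notin> ?N ` frontier U"
      proof
        assume "0 \<in> ?N ` frontier U"
        then obtain z where z: "z \<in> frontier U" "?N z = 0" by auto
        have "z \<in> ?C" using z(1) U unfolding frontier_def by auto
        then have "z = ys" using \<phi>N z(2) unfolding ys_def by metis
        then have "z \<in> U" using U by simp
        then show False using z(1) U by (simp add: frontier_def interior_open)
      qed
      show "\<exists>S f'. open S \<and> closure U \<subseteq> S \<and> continuous_on S f' \<and>
              (\<forall>x\<in>S. (?N has_derivative blinfun_apply (f' x)) (at x))"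
      proof (intro exI conjI ballI)
        show "open ?C" by (rule cone_open)
        show "closure U \<subseteq> ?C" using U by simp
        show "(?N has_derivative blinfun_apply (Blinfun (Dmap a0 l x))) (at x)" if "x \<in> ?C" for x
          using deriv[OF that] bounded_linear_Blinfun_apply[OF blin[OF that]] by simp
        show "continuous_on ?C (\<lambda>x. Blinfun (Dmap a0 l x))"
        proof (rule continuous_on_blinfun_componentwise)
          fix e :: "(real,'n) vec"
          have "continuous_on ?C (\<lambda>x. Dmap a0 l x e)"
            unfolding Dmap_def by (intro continuous_intros) (auto dest: cone_ne)
          then show "continuous_on ?C (\<lambda>x. blinfun_apply (Blinfun (Dmap a0 l x)) e)"
            by (rule continuous_on_eq) (simp add: bounded_linear_Blinfun_apply[OF blin])
        qed
      qed
      show "\<forall>p. dist p 0 < infdist 0 (?N ` frontier U) \<longrightarrow>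
        (\<forall>x\<in>closure U. ?N x = p \<longrightarrow> det (matrix (frechet_derivative ?N (at x))) \<noteq> 0) \<longrightarrow>
        (\<Sum>x\<in>{x\<in>U. ?N x = p}. sgn (det (matrix (frechet_derivative ?N (at x))))) = of_int 1"
      proof (intro allI impI)
        fix p assume dp: "dist p 0 < infdist 0 (?N ` frontier U)"
          and reg: "\<forall>x\<in>closure U. ?N x = p \<longrightarrow> det (matrix (frechet_derivative ?N (at x))) \<noteq> 0"
        have inU: "\<phi> p \<in> U"
        proof (rule ccontr)
          assume nU: "\<phi> p \<notin> U"
          define G where "G = (\<lambda>t. \<phi> (t *\<^sub>R p)) ` {0..1::real}"
          have "continuous_on {0..1::real} (\<lambda>t. \<phi> (t *\<^sub>R p))"
            by (rule continuous_on_compose2[OF cont\<phi>]) (auto intro: continuous_intros)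
          then have "connected G" unfolding G_def by (rule connected_continuous_image) simp
          moreover have "ys \<in> G \<inter> U" unfolding G_def using U unfolding ys_def by (auto intro!: image_eqI[where x=0])
          moreover have "\<phi> p \<in> G - U" unfolding G_def using nU by (auto intro!: image_eqI[where x=1])
          ultimately have "G \<inter> frontier U \<noteq> {}" using connected_Int_frontier by blast
          then obtain t where t: "0 \<le> t" "t \<le> 1" "\<phi> (t *\<^sub>R p) \<in> frontier U" unfolding G_def by auto
          have "infdist 0 (?N ` frontier U) \<le> dist 0 (?N (\<phi> (t *\<^sub>R p)))"
            by (rule infdist_le) (use t in auto)
          also have "... = \<bar>t\<bar> * norm p" by (simp add: N\<phi>)
          also have "... \<le> norm p" using t by (simp add: mult_left_le_one_le)
          finally show False using dp by (simp add: dist_norm)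
        qed
        have set: "{x\<in>U. ?N x = p} = {\<phi> p}"
          using inU N\<phi> \<phi>N UC by auto
        have "det (matrix (frechet_derivative ?N (at (\<phi> p)))) > 0"
        proof (rule det_pos_psd)
          show "h \<bullet> (matrix (frechet_derivative ?N (at (\<phi> p))) *v h) \<ge> 0" for h
            unfolding jac[OF \<phi>C] by (rule Dmap_psd[OF \<phi>C assms])
          show "det (matrix (frechet_derivative ?N (at (\<phi> p)))) \<noteq> 0"
            using reg inU closure_subset N\<phi> by blast
        qed
        then show "(\<Sum>x\<in>{x\<in>U. ?N x = p}. sgn (det (matrix (frechet_derivative ?N (at x))))) = of_int 1"
          unfolding set by simp
      qed
    qed
  qed
qed

end
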